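(* For every positive integer $n$, $$\sum_{j=1}^{n-1}\csc^6\left(\frac{j\pi}{2n}\right) = \frac{8(n+1)(n-1)(8n^4+29n^2+71)}{945}.$$
   Context: Empty sums are equal to $0$. *)

theory Defs
  imports Complex_Main
begin

definition csc :: "real \<Rightarrow> real" where
  "csc x = 1 / sin x"

end

theory Submission
  imports Defs "HOL-Computational_Algebra.Polynomial"
begin


lemma coeff_lin_mult_Suc:
  fixes P :: "real poly"
  shows "coeff ([:1, -a:] * P) (Suc k) = coeff P (Suc k) - a * coeff P k"
  by (simp add: mult_pCons_left)

lemma coeff_lin_mult_0:
  fixes P :: "real poly"
  shows "coeff ([:1, -a:] * P) 0 = coeff P 0"
  by (simp add: mult_pCons_left)

lemma prod_coeffs:
  fixes f :: "nat \<Rightarrow> real"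
  assumes "finite A"
  shows "coeff (\<Prod>j\<in>A. [:1, - f j:]) 0 = 1 \<and>
         coeff (\<Prod>j\<in>A. [:1, - f j:]) 1 = - (\<Sum>j\<in>A. f j) \<and>
         coeff (\<Prod>j\<in>A. [:1, - f j:]) 2 = ((\<Sum>j\<in>A. f j)^2 - (\<Sum>j\<in>A. f j^2)) / 2 \<and>
         coeff (\<Prod>j\<in>A. [:1, - f j:]) 3 = - ((\<Sum>j\<in>A. f j)^3 - 3 * (\<Sum>j\<in>A. f j) * (\<Sum>j\<in>A. f j^2) + 2 * (\<Sum>j\<in>A. f j^3)) / 6"
  using assms
proof (induction A rule: finite_induct)
  case empty
  then show ?case by simp
next
  case (insert x F)
  let ?P = "\<Prod>j\<in>F. [:1, - f j:]"
  have e: "(\<Prod>j\<in>insert x F. [:1, - f j:]) = [:1, - f x:] * ?P" using insert by simp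
  have c1: "coeff ([:1, - f x:] * ?P) 1 = coeff ?P 1 - f x * coeff ?P 0"
    using coeff_lin_mult_Suc[of "f x" ?P 0] by simp
  have c2: "coeff ([:1, - f x:] * ?P) 2 = coeff ?P 2 - f x * coeff ?P 1"
    using coeff_lin_mult_Suc[of "f x" ?P 1] by (simp add: numeral_2_eq_2)
  have c3: "coeff ([:1, - f x:] * ?P) 3 = coeff ?P 3 - f x * coeff ?P 2"
    using coeff_lin_mult_Suc[of "f x" ?P 2] by (simp add: numeral_3_eq_3 numeral_2_eq_2)
  obtain h0 h1 h2 h3 where "coeff ?P 0 = 1" and "coeff ?P 1 = - (\<Sum>j\<in>F. f j)" and
     "coeff ?P 2 = ((\<Sum>j\<in>F. f j)^2 - (\<Sum>j\<in>F. f j^2)) / 2" and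
     "coeff ?P 3 = - ((\<Sum>j\<in>F. f j)^3 - 3 * (\<Sum>j\<in>F. f j) * (\<Sum>j\<in>F. f j^2) + 2 * (\<Sum>j\<in>F. f j^3)) / 6"
    using insert.IH by blast
  note hs = this
  show ?case unfolding e c1 c2 c3 coeff_lin_mult_0 sum.insert[OF insert(1,2)] hs
    by (simp add: field_simps power2_eq_square power3_eq_cube)
qed

lemma choose3: "real (m choose 3) = real m * (real m - 1) * (real m - 2) / 6"
  by (simp add: binomial_gbinomial gbinomial_prod_rev numeral_3_eq_3 prod.atLeast0_lessThan_Suc fact_numeral)

lemma choose5: "real (m choose 5) = real m * (real m - 1) * (real m - 2) * (real m - 3) * (real m - 4) / 120"
  by (simp add: binomial_gbinomial gbinomial_prod_rev eval_nat_numeral prod.atLeast0_lessThan_Suc fact_numeral)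

lemma choose7: "real (m choose 7) = real m * (real m - 1) * (real m - 2) * (real m - 3) * (real m - 4) * (real m - 5) * (real m - 6) / 5040"
  by (simp add: binomial_gbinomial gbinomial_prod_rev eval_nat_numeral prod.atLeast0_lessThan_Suc fact_numeral)



lemma sum_atMost_even_split:
  fixes g :: "nat \<Rightarrow> real"
  shows "(\<Sum>i\<le>2*n. g i) = (\<Sum>k<n. g (2*k) + g (2*k+1)) + g (2*n)"
  by (induction n) (auto simp: sum.atMost_Suc)

lemma Im_i_pow_even: "Im (\<i> ^ (2*k)) = 0"
  by (simp add: power_mult)

lemma Im_i_pow_odd: "Im (\<i> ^ (2*k+1)) = (-1)^k"
  by (simp add: power_mult)

lemma R_root:
  fixes t :: real
  shows "t * (\<Sum>k\<le>n. (-1)^k * real (2*n choose (2*k+1)) * (t^2)^k) = Im ((Complex 1 t)^(2*n))"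
proof -
  have "Complex 1 t = \<i> * complex_of_real t + 1" by (simp add: complex_eq_iff)
  hence "(Complex 1 t)^(2*n) = (\<Sum>i\<le>2*n. of_nat (2*n choose i) * (\<i> * complex_of_real t)^i * 1^(2*n-i))"
    by (simp only: binomial_ring)
  hence "Im ((Complex 1 t)^(2*n)) = (\<Sum>i\<le>2*n. real (2*n choose i) * t^i * Im (\<i>^i))"
    by (simp add: power_mult_distrib mult_ac)
  also have "\<dots> = (\<Sum>k<n. real (2*n choose (2*k+1)) * t^(2*k+1) * (-1)^k)"
    by (subst sum_atMost_even_split) (simp add: Im_i_pow_even Im_i_pow_odd)
  also have "\<dots> = (\<Sum>k\<le>n. real (2*n choose (2*k+1)) * t^(2*k+1) * (-1)^k)"
    by (simp add: sum.atMost_Suc lessThan_Suc_atMost[symmetric])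
  also have "\<dots> = t * (\<Sum>k\<le>n. (-1)^k * real (2*n choose (2*k+1)) * (t^2)^k)"
    by (simp add: sum_distrib_left power_mult mult_ac flip: power_mult power_add)
  finally show ?thesis by simp
qed

lemma tan_root:
  fixes j n :: nat
  assumes "0 < j" "j < n"
  defines "\<theta> \<equiv> real j * pi / (2 * real n)"
  shows "(\<Sum>k\<le>n. (-1)^k * real (2*n choose (2*k+1)) * (tan \<theta>^2)^k) = 0"
proof -
  have th: "0 < \<theta>" "\<theta> < pi/2" using assms by (auto simp: \<theta>_def field_simps)
  have c: "cos \<theta> > 0" using th by (intro cos_gt_zero) auto
  have s: "sin \<theta> > 0" using th by (intro sin_gt_zero) auto
  have "Complex 1 (tan \<theta>) = cis \<theta> / complex_of_real (cos \<theta>)"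
    using c by (simp add: complex_eq_iff tan_def cis.sel)
  hence "(Complex 1 (tan \<theta>))^(2*n) = cis (real (2*n) * \<theta>) / complex_of_real (cos \<theta> ^ (2*n))"
    by (simp add: power_divide DeMoivre)
  moreover have "real (2*n) * \<theta> = real j * pi" using assms by (simp add: \<theta>_def field_simps)
  ultimately have "Im ((Complex 1 (tan \<theta>))^(2*n)) = 0"
    by (simp add: Im_divide_of_real)
  with R_root[of "tan \<theta>" n] have "tan \<theta> * (\<Sum>k\<le>n. (-1)^k * real (2*n choose (2*k+1)) * (tan \<theta>^2)^k) = 0"
    by simp
  moreover have "tan \<theta> \<noteq> 0" using c s by (simp add: tan_def)
  ultimately show ?thesis by simp
qed


lemma final_alg:
  fixes n p1 p2 p3 C3 C5 C7 :: real
  assumes n: "n \<ge> 1"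
  and c3: "C3 = (2*n) * (2*n - 1) * (2*n - 2) / 6"
  and c5: "C5 = (2*n) * (2*n - 1) * (2*n - 2) * (2*n-3) * (2*n-4) / 120"
  and c7: "C7 = (2*n) * (2*n - 1) * (2*n - 2) * (2*n-3) * (2*n-4) * (2*n-5) * (2*n-6) / 5040"
  and E1: "- C3 = 2 * n * (- p1)"
  and E2: "C5 = 2 * n * ((p1^2 - p2)/2)"
  and E3: "- C7 = 2 * n * (- (p1^3 - 3*p1*p2 + 2*p3)/6)"
  shows "(n - 1) + 3 * p1 + 3 * p2 + p3 = 8 * (n + 1) * (n - 1) * (8 * n ^ 4 + 29 * n ^ 2 + 71) / 945"
proof -
  have h0: "p1 = C3/(2*n)" using E1 n by (simp add: field_simps)
  have h1: "p1 = (2*n-1)*(n-1)/3" unfolding h0 c3 using n by (simp add: field_simps)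
  have q: "C5 / n = (2*n-1)*(n-1)*(2*n-3)*(n-2)/15" using n unfolding c5 by (simp add: field_simps)
  have r: "C7 / n = (2*n-1)*(n-1)*(2*n-3)*(n-2)*(2*n-5)*(n-3)/315" using n unfolding c7 by (simp add: field_simps)
  have h2: "p2 = p1^2 - C5 / n" using E2 n by (simp add: field_simps)
  have h3: "p3 = (3 * (C7 / n) - p1^3 + 3*p1*p2) / 2" using E3 n by (simp add: field_simps)
  show ?thesis unfolding h3 h2 q r h1
    by (simp add: field_simps power2_eq_square power3_eq_cube) (simp add: algebra_simps eval_nat_numeral)
qed

theorem mainTheorem18:
  fixes n :: nat
  assumes "n \<ge> 1"
  shows "(\<Sum>j=1..n-1. csc (real j * pi / (2 * real n)) ^ 6)
         = 8 * (real n + 1) * (real n - 1) * (8 * real n ^ 4 + 29 * real n ^ 2 + 71) / 945"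
proof -
  define th where "th j = real j * pi / (2 * real n)" for j :: nat
  define y where "y j = tan (th j) ^ 2" for j
  define r where "r j = 1 / y j" for j
  define A where "A = {1..n-1}"
  define R :: "real poly" where "R = (\<Sum>k\<le>n. monom ((-1)^k * real (2*n choose (2*k+1))) k)"
  define Q where "Q = smult (2 * real n) (\<Prod>j\<in>A. [:1, - r j:])"
  have thb: "0 < th j \<and> th j < pi/2" if "j \<in> A" for j
    using that assms by (auto simp: th_def A_def field_simps)
  have ypos: "y j > 0" if "j \<in> A" for j
  proof -
    have "tan (th j) > 0" using thb[OF that] by (intro tan_gt_zero) auto
    thus ?thesis by (simp add: y_def)
  qed
  have coeffR: "coeff R i = (if i \<le> n then (-1)^i * real (2*n choose (2*i+1)) else 0)" for i
    by (simp add: R_def coeff_sum coeff_monom)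
  have polyR: "poly R x = (\<Sum>k\<le>n. (-1)^k * real (2*n choose (2*k+1)) * x^k)" for x
    by (simp add: R_def poly_sum poly_monom)
  have degR: "degree R \<le> n - 1"
  proof (rule degree_le, intro allI impI)
    fix i assume "n - 1 < i"
    hence "i \<ge> n" using assms by simp
    hence "2*n < 2*i+1" by simp
    thus "coeff R i = 0" by (simp add: coeffR binomial_eq_0)
  qed
  have degQ: "degree Q \<le> n - 1"
  proof -
    have "degree (\<Prod>j\<in>A. [:1, - r j:]) \<le> (\<Sum>j\<in>A. degree [:1, - r j:])"
      using degree_prod_sum_le[of A "\<lambda>j. [:1, - r j:]"] by (simp add: A_def o_def)
    also have "\<dots> \<le> (\<Sum>j\<in>A. 1)" by (intro sum_mono) simp
    also have "\<dots> = n - 1" by (simp add: A_def)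
    finally show ?thesis unfolding Q_def using degree_smult_le order_trans by blast
  qed
  define B where "B = insert 0 (y ` A)"
  have injy: "inj_on y A"
  proof (rule inj_onI, rule ccontr)
    fix a b assume ab: "a \<in> A" "b \<in> A" "y a = y b" "a \<noteq> b"
    have mono: "y a < y b" if "a \<in> A" "b \<in> A" "a < b" for a b
    proof -
      have "th a < th b" using that assms by (simp add: th_def A_def field_simps)
      hence "tan (th a) < tan (th b)" using thb[OF that(1)] thb[OF that(2)]
        by (intro tan_monotone) auto
      moreover have "tan (th a) > 0" using thb[OF that(1)] by (intro tan_gt_zero) auto
      ultimately show ?thesis unfolding y_def by (intro power_strict_mono) auto
    qed
    show False
    proof (cases "a < b")
      case True thus ?thesis using mono[OF ab(1,2)] ab by simp
    next
      case False hence "b < a" using ab by simp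
      thus ?thesis using mono[OF ab(2,1)] ab by simp
    qed
  qed
  have cardB: "card B = n"
  proof -
    have "0 \<notin> y ` A" using ypos by fastforce
    hence "card B = Suc (card (y ` A))" by (simp add: B_def A_def)
    also have "card (y ` A) = card A" using injy by (rule card_image)
    finally show ?thesis using assms by (simp add: A_def)
  qed
  have RQ: "R = Q"
  proof (rule poly_eqI_degree[of B])
    fix x assume "x \<in> B"
    then consider "x = 0" | j where "j \<in> A" "x = y j" by (auto simp: B_def)
    thus "poly R x = poly Q x"
    proof cases
      case 1
      have "poly R 0 = real (2*n choose 1)" unfolding polyR
        by (simp add: zero_power sum.atMost_shift)
      thus ?thesis using 1 by (simp add: Q_def poly_prod)
    next
      case 2
      have "poly R x = 0" unfolding polyR 2(2) y_def th_def
        using tan_root[of j n] 2(1) by (auto simp: A_def)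
      moreover have "poly Q x = 0"
      proof -
        have "poly [:1, - r j:] x = 0" using ypos[OF 2(1)] by (simp add: r_def 2(2))
        hence "poly (\<Prod>j\<in>A. [:1, - r j:]) x = 0" using 2(1)
          by (auto simp: poly_prod A_def intro!: prod_zero)
        thus ?thesis by (simp add: Q_def)
      qed
      ultimately show ?thesis by simp
    qed
  qed (use degR degQ cardB assms in auto)
  have PC: "coeff (\<Prod>j\<in>A. [:1, - r j:]) 0 = 1 \<and>
         coeff (\<Prod>j\<in>A. [:1, - r j:]) 1 = - (\<Sum>j\<in>A. r j) \<and>
         coeff (\<Prod>j\<in>A. [:1, - r j:]) 2 = ((\<Sum>j\<in>A. r j)^2 - (\<Sum>j\<in>A. r j^2)) / 2 \<and>
         coeff (\<Prod>j\<in>A. [:1, - r j:]) 3 = - ((\<Sum>j\<in>A. r j)^3 - 3 * (\<Sum>j\<in>A. r j) * (\<Sum>j\<in>A. r j^2) + 2 * (\<Sum>j\<in>A. r j^3)) / 6"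
    by (rule prod_coeffs) (simp add: A_def)
  have cq: "coeff R k = 2 * real n * coeff (\<Prod>j\<in>A. [:1, - r j:]) k" for k
    unfolding RQ Q_def by simp
  have r1: "coeff R 1 = - real (2*n choose 3)" using assms by (simp add: coeffR)
  have r2: "coeff R 2 = real (2*n choose 5)"
    using assms by (cases "n \<ge> 2") (auto simp: coeffR binomial_eq_0)
  have r3: "coeff R 3 = - real (2*n choose 7)"
    using assms by (cases "n \<ge> 3") (auto simp: coeffR binomial_eq_0)
  have E1: "- real (2*n choose 3) = 2 * real n * (- (\<Sum>j\<in>A. r j))"
  proof -
    have "- real (2*n choose 3) = 2 * real n * coeff (\<Prod>j\<in>A. [:1, - r j:]) 1" using cq[of 1] r1 by simp
    also have "coeff (\<Prod>j\<in>A. [:1, - r j:]) 1 = - (\<Sum>j\<in>A. r j)" using PC by blast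
    finally show ?thesis .
  qed
  have E2: "real (2*n choose 5) = 2 * real n * (((\<Sum>j\<in>A. r j)^2 - (\<Sum>j\<in>A. r j^2)) / 2)"
  proof -
    have "real (2*n choose 5) = 2 * real n * coeff (\<Prod>j\<in>A. [:1, - r j:]) 2" using cq[of 2] r2 by simp
    also have "coeff (\<Prod>j\<in>A. [:1, - r j:]) 2 = ((\<Sum>j\<in>A. r j)^2 - (\<Sum>j\<in>A. r j^2)) / 2" using PC by blast
    finally show ?thesis .
  qed
  have E3: "- real (2*n choose 7) = 2 * real n * (- ((\<Sum>j\<in>A. r j)^3 - 3 * (\<Sum>j\<in>A. r j) * (\<Sum>j\<in>A. r j^2) + 2 * (\<Sum>j\<in>A. r j^3)) / 6)"
  proof -
    have "- real (2*n choose 7) = 2 * real n * coeff (\<Prod>j\<in>A. [:1, - r j:]) 3" using cq[of 3] r3 by simp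
    also have "coeff (\<Prod>j\<in>A. [:1, - r j:]) 3 = - ((\<Sum>j\<in>A. r j)^3 - 3 * (\<Sum>j\<in>A. r j) * (\<Sum>j\<in>A. r j^2) + 2 * (\<Sum>j\<in>A. r j^3)) / 6" using PC by blast
    finally show ?thesis .
  qed
  have cscr: "csc (th j) ^ 6 = (1 + r j) ^ 3" if "j \<in> A" for j
  proof -
    have "sin (th j) > 0" "cos (th j) > 0" using thb[OF that] by (auto intro: sin_gt_zero cos_gt_zero)
    hence "csc (th j) ^ 2 = 1 + r j"
      by (simp add: csc_def r_def y_def tan_def field_simps power2_eq_square)
    hence "(csc (th j) ^ 2) ^ 3 = (1 + r j) ^ 3" by simp
    thus ?thesis by (simp flip: power_mult)
  qed
  have "(\<Sum>j=1..n-1. csc (real j * pi / (2 * real n)) ^ 6) = (\<Sum>j\<in>A. (1 + r j)^3)"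
    using cscr by (simp add: A_def th_def)
  also have "\<dots> = (\<Sum>j\<in>A. 1 + 3 * r j + 3 * r j^2 + r j^3)"
    by (intro sum.cong) (simp_all add: power3_eq_cube power2_eq_square algebra_simps)
  also have "\<dots> = (real n - 1) + 3 * (\<Sum>j\<in>A. r j) + 3 * (\<Sum>j\<in>A. r j^2) + (\<Sum>j\<in>A. r j^3)"
    using assms by (simp add: sum.distrib sum_distrib_left A_def of_nat_diff)
  also have "\<dots> = 8 * (real n + 1) * (real n - 1) * (8 * real n ^ 4 + 29 * real n ^ 2 + 71) / 945"
    by (rule final_alg[OF _ _ _ _ E1 E2 E3])
       (use assms in \<open>simp_all add: choose3 choose5 choose7\<close>)
  finally show ?thesis .
qed

end
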